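(* Assume (A1)–(A3) and let $\bar u_{\bar e}\in S(\bar e)$. Then for every $u^*\in L^2(\Omega)$, $\widehat D^*\mathcal G(\bar e,\bar u_{\bar e})(u^* )=\{e^*\in E^*: e^*=(0,0,e^*_\alpha,e^*_\beta),\ u^*=u^*_1-u^*_2,\ u^*_1=e^*_\alpha+e^*_\beta,\ u^*_2\in N(\bar u_{\bar e};\mathcal Q),\ e^*_\alpha\ge0\text{ on }\Omega_1(\bar e,\bar u_{\bar e}),\ e^*_\alpha=0\text{ on }\Omega\setminus\Omega_1(\bar e,\bar u_{\bar e}),\ e^*_\beta\le0\text{ on }\Omega_3(\bar e,\bar u_{\bar e}),\ e^*_\beta=0\text{ on }\Omega\setminus\Omega_3(\bar e,\bar u_{\bar e})\}$.
   Context: Let $\Omega\subset\mathbb R^N$, $N\in\{1,2,3\}$; $\alpha,\beta\in L^\infty(\Omega)$, $\alpha\le\beta$, $\alpha\not\equiv\beta$; $\zeta\in L^2(\Omega)$, $\zeta\ge0$. $Ay=-\sum_{i,j}\partial_{x_j}(a_{ij}\partial_{x_i}y)$. $L,f$ Carathéodory, $C^2$ in $y$, with (A1) $f(\cdot,0)\in L^{\bar p}$, $\bar p>N/2$, $\partial f/\partial y\ge0$, $|\partial f/\partial y|+|\partial^2f/\partial y^2|\le C_{f,M}$ for $|y|\le M$, $\partial^2f/\partial y^2(x,\cdot)$ uniformly continuous on $[-M,M]$ uniformly in $x$; (A2) $L(\cdot,0)\in L^1$, $|\partial L/\partial y|\le\psi_M\in L^{\bar p}$, $|\partial^2L/\partial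 y^2|\le C_{L,M}$ for $|y|\le M$, $\partial^2L/\partial y^2(x,\cdot)$ uniformly continuous likewise; (A3) $\Omega$ open bounded with Lipschitz boundary $\Gamma$, $\mathcal Q\subset L^2(\Omega)$ closed convex bounded with $\mathcal U_{ad}(e)\cap\operatorname{int}\mathcal Q\ne\emptyset$ for some $e$, $a_{ij}\in C(\bar\Omega)$ uniformly elliptic. $y_u$ solves $Ay+f(x,y)=u$, $y=0$ on $\Gamma$; $J(u)=\int_\Omega L(x,y_u)+\frac12\int_\Omega\zeta u^2$. $E=L^2(\Omega)^4$, $e=(e_y,e_J,e_\alpha,e_\beta)$; $\mathcal U_{ad}(e)=\{u\in L^2:\alpha+e_\alpha\le u\le\beta+e_\beta\text{ a.e.}\}$, $\mathcal G(e)=\mathcal U_{ad}(e)\cap\mathcal Q$; $\mathcal J(u,e)=J(u+e_y)+(e_J,y_{u+e_y})_{L^2}$; $\mu(e)=\inf_{u\in\mathcal G(e)}\mathcal J(u,e)$; $S(e)=\{u\in\mathcal G(e):\mathcal J(u,e)=\mu(e)\}$. $\Omega_1(e,u)=\{x:u(x)=\alpha(x)+e_\alpha(x)\}$, $\Omega_3(e,u)=\{x:u(x)=\beta(x)+e_\beta(x)\}$. $N(\cdot;\mathcal Q)$ is the normal cone of convex analysis. The regular coderivative is $\widehat D^*\mathcal G(\bar e,\bar u)(u^* )=\{e^*\in E^*:(e^*,-u^* )\in\widehat N((\bar e,\bar u);\operatorname{gph}\mathcal G)\}$, with $\widehat N$ the regular (Fréchet) normal cone. *)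

theory Defs
  imports "HOL-Analysis.Analysis"
begin

type_synonym 'n fn = "real^'n \<Rightarrow> real"
type_synonym 'n E = "'n fn \<times> 'n fn \<times> 'n fn \<times> 'n fn"

section \<open>Lebesgue spaces on a domain (functions as representatives of classes)\<close>

definition L2 :: "(real^'n) set \<Rightarrow> 'n fn set" where
  "L2 \<Omega> = {f. f \<in> borel_measurable (lebesgue_on \<Omega>) \<and>
               integrable (lebesgue_on \<Omega>) (\<lambda>x. (f x)^2)}"

definition Lp :: "(real^'n) set \<Rightarrow> real \<Rightarrow> 'n fn set" where
  "Lp \<Omega> p = {f. f \<in> borel_measurable (lebesgue_on \<Omega>) \<and>
               integrable (lebesgue_on \<Omega>) (\<lambda>x. \<bar>f x\<bar> powr p)}"

definition Linf :: "(real^'n) set \<Rightarrow> 'n fn set" where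
  "Linf \<Omega> = {f. f \<in> borel_measurable (lebesgue_on \<Omega>) \<and>
               (\<exists>C. AE x in lebesgue_on \<Omega>. \<bar>f x\<bar> \<le> C)}"

definition ipL2 :: "(real^'n) set \<Rightarrow> 'n fn \<Rightarrow> 'n fn \<Rightarrow> real" where
  "ipL2 \<Omega> f g = (\<integral>x. f x * g x \<partial>lebesgue_on \<Omega>)"

definition nrmL2 :: "(real^'n) set \<Rightarrow> 'n fn \<Rightarrow> real" where
  "nrmL2 \<Omega> f = sqrt (ipL2 \<Omega> f f)"

definition ey :: "'n E \<Rightarrow> 'n fn" where "ey e = fst e"
definition eJ :: "'n E \<Rightarrow> 'n fn" where "eJ e = fst (snd e)"
definition ea :: "'n E \<Rightarrow> 'n fn" where "ea e = fst (snd (snd e))"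
definition eb :: "'n E \<Rightarrow> 'n fn" where "eb e = snd (snd (snd e))"

definition EL2 :: "(real^'n) set \<Rightarrow> 'n E set" where
  "EL2 \<Omega> = {e. ey e \<in> L2 \<Omega> \<and> eJ e \<in> L2 \<Omega> \<and> ea e \<in> L2 \<Omega> \<and> eb e \<in> L2 \<Omega>}"

definition ipE :: "(real^'n) set \<Rightarrow> 'n E \<Rightarrow> 'n E \<Rightarrow> real" where
  "ipE \<Omega> e e' = ipL2 \<Omega> (ey e) (ey e') + ipL2 \<Omega> (eJ e) (eJ e')
                 + ipL2 \<Omega> (ea e) (ea e') + ipL2 \<Omega> (eb e) (eb e')"

definition subE :: "'n E \<Rightarrow> 'n E \<Rightarrow> 'n E" where
  "subE e e' = ((\<lambda>x. ey e x - ey e' x), (\<lambda>x. eJ e x - eJ e' x),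
                (\<lambda>x. ea e x - ea e' x), (\<lambda>x. eb e x - eb e' x))"

definition ipX :: "(real^'n) set \<Rightarrow> 'n E \<times> 'n fn \<Rightarrow> 'n E \<times> 'n fn \<Rightarrow> real" where
  "ipX \<Omega> z w = ipE \<Omega> (fst z) (fst w) + ipL2 \<Omega> (snd z) (snd w)"

definition nrmX :: "(real^'n) set \<Rightarrow> 'n E \<times> 'n fn \<Rightarrow> real" where
  "nrmX \<Omega> z = sqrt (ipX \<Omega> z z)"

definition subX :: "'n E \<times> 'n fn \<Rightarrow> 'n E \<times> 'n fn \<Rightarrow> 'n E \<times> 'n fn" where
  "subX z w = (subE (fst z) (fst w), (\<lambda>x. snd z x - snd w x))"

text \<open>Regular (Frechet) normal cone to S at z in the Hilbert space E x L2, with the dual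
  identified with the space itself via the L2 inner product:
  limsup_{w -> z, w in S} <z*, w - z> / ||w - z|| <= 0, written in epsilon-delta form.\<close>
definition reg_normal :: "(real^'n) set \<Rightarrow> ('n E \<times> 'n fn) set \<Rightarrow> 'n E \<times> 'n fn
                          \<Rightarrow> ('n E \<times> 'n fn) set" where
  "reg_normal \<Omega> S z =
     (if z \<in> S then
       {zs. fst zs \<in> EL2 \<Omega> \<and> snd zs \<in> L2 \<Omega> \<and>
          (\<forall>\<epsilon>>0. \<exists>\<delta>>0. \<forall>w\<in>S. nrmX \<Omega> (subX w z) < \<delta> \<longrightarrow>
                 ipX \<Omega> zs (subX w z) \<le> \<epsilon> * nrmX \<Omega> (subX w z))}
      else {})"

definition normal_cone_L2 :: "(real^'n) set \<Rightarrow> 'n fn set \<Rightarrow> 'n fn \<Rightarrow> 'n fn set" where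
  "normal_cone_L2 \<Omega> Q u =
     (if u \<in> Q then {v \<in> L2 \<Omega>. \<forall>q\<in>Q. ipL2 \<Omega> v (\<lambda>x. q x - u x) \<le> 0} else {})"

definition Uad :: "(real^'n) set \<Rightarrow> 'n fn \<Rightarrow> 'n fn \<Rightarrow> 'n E \<Rightarrow> 'n fn set" where
  "Uad \<Omega> \<alpha> \<beta> e = {u \<in> L2 \<Omega>. AE x in lebesgue_on \<Omega>.
                       \<alpha> x + ea e x \<le> u x \<and> u x \<le> \<beta> x + eb e x}"

definition Gmap :: "(real^'n) set \<Rightarrow> 'n fn \<Rightarrow> 'n fn \<Rightarrow> 'n fn set \<Rightarrow> 'n E \<Rightarrow> 'n fn set" where
  "Gmap \<Omega> \<alpha> \<beta> Q e = Uad \<Omega> \<alpha> \<beta> e \<inter> Q"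

definition gphG :: "(real^'n) set \<Rightarrow> 'n fn \<Rightarrow> 'n fn \<Rightarrow> 'n fn set \<Rightarrow> ('n E \<times> 'n fn) set" where
  "gphG \<Omega> \<alpha> \<beta> Q = {(e, u). e \<in> EL2 \<Omega> \<and> u \<in> Gmap \<Omega> \<alpha> \<beta> Q e}"

definition coderivG :: "(real^'n) set \<Rightarrow> 'n fn \<Rightarrow> 'n fn \<Rightarrow> 'n fn set \<Rightarrow> 'n E \<Rightarrow> 'n fn
                        \<Rightarrow> 'n fn \<Rightarrow> 'n E set" where
  "coderivG \<Omega> \<alpha> \<beta> Q e u us =
     {es \<in> EL2 \<Omega>. (es, (\<lambda>x. - us x)) \<in> reg_normal \<Omega> (gphG \<Omega> \<alpha> \<beta> Q) (e, u)}"

definition Omega1 :: "(real^'n) set \<Rightarrow> 'n fn \<Rightarrow> 'n E \<Rightarrow> 'n fn \<Rightarrow> (real^'n) set" where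
  "Omega1 \<Omega> \<alpha> e u = {x \<in> \<Omega>. u x = \<alpha> x + ea e x}"

definition Omega3 :: "(real^'n) set \<Rightarrow> 'n fn \<Rightarrow> 'n E \<Rightarrow> 'n fn \<Rightarrow> (real^'n) set" where
  "Omega3 \<Omega> \<beta> e u = {x \<in> \<Omega>. u x = \<beta> x + eb e x}"

definition pd :: "'n::finite \<Rightarrow> 'n fn \<Rightarrow> 'n fn" where
  "pd i \<phi> = (\<lambda>x. frechet_derivative \<phi> (at x) (axis i 1))"

definition smooth_fn :: "('n::finite) fn \<Rightarrow> bool" where
  "smooth_fn \<phi> \<longleftrightarrow> (\<forall>is :: 'n list. \<forall>x. (foldr pd is \<phi>) differentiable (at x))"

definition testfun :: "(real^'n::finite) set \<Rightarrow> 'n fn \<Rightarrow> bool" where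
  "testfun \<Omega> \<phi> \<longleftrightarrow> smooth_fn \<phi> \<and> (\<exists>K. compact K \<and> K \<subseteq> \<Omega> \<and> (\<forall>x. x \<notin> K \<longrightarrow> \<phi> x = 0))"

definition weak_pd :: "(real^'n::finite) set \<Rightarrow> 'n \<Rightarrow> 'n fn \<Rightarrow> 'n fn \<Rightarrow> bool" where
  "weak_pd \<Omega> i y g \<longleftrightarrow> (\<forall>\<phi>. testfun \<Omega> \<phi> \<longrightarrow>
      (\<integral>x. y x * pd i \<phi> x \<partial>lebesgue_on \<Omega>) = - (\<integral>x. g x * \<phi> x \<partial>lebesgue_on \<Omega>))"

definition H10 :: "(real^'n::finite) set \<Rightarrow> 'n fn set" where
  "H10 \<Omega> = {y. y \<in> L2 \<Omega> \<and> (\<exists>Gr. (\<forall>i. Gr i \<in> L2 \<Omega> \<and> weak_pd \<Omega> i y (Gr i)) \<and>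
        (\<forall>\<epsilon>>0. \<exists>\<phi>. testfun \<Omega> \<phi> \<and>
           (nrmL2 \<Omega> (\<lambda>x. y x - \<phi> x))^2 + (\<Sum>i\<in>UNIV. (nrmL2 \<Omega> (\<lambda>x. Gr i x - pd i \<phi> x))^2)
             < \<epsilon>^2))}"

text \<open>y is a (bounded) weak solution of  A y + f(x,y) = u in Omega, y = 0 on the boundary,
  where A y = - sum_{i,j} d_{x_j} (a_ij d_{x_i} y).\<close>
definition weak_sol :: "(real^'n::finite) set \<Rightarrow> ('n \<Rightarrow> 'n \<Rightarrow> 'n fn)
                        \<Rightarrow> (real^'n \<Rightarrow> real \<Rightarrow> real) \<Rightarrow> 'n fn \<Rightarrow> 'n fn \<Rightarrow> bool" where
  "weak_sol \<Omega> a f u y \<longleftrightarrow> y \<in> H10 \<Omega> \<and> y \<in> Linf \<Omega> \<and>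
     (\<exists>Gr. (\<forall>i. Gr i \<in> L2 \<Omega> \<and> weak_pd \<Omega> i y (Gr i)) \<and>
        (\<forall>\<phi>. testfun \<Omega> \<phi> \<longrightarrow>
          (\<integral>x. (\<Sum>i\<in>UNIV. \<Sum>j\<in>UNIV. a i j x * Gr i x * pd j \<phi> x) + f x (y x) * \<phi> x
               \<partial>lebesgue_on \<Omega>)
          = (\<integral>x. u x * \<phi> x \<partial>lebesgue_on \<Omega>)))"

definition ysol :: "(real^'n::finite) set \<Rightarrow> ('n \<Rightarrow> 'n \<Rightarrow> 'n fn)
                    \<Rightarrow> (real^'n \<Rightarrow> real \<Rightarrow> real) \<Rightarrow> 'n fn \<Rightarrow> 'n fn" where
  "ysol \<Omega> a f u = (SOME y. weak_sol \<Omega> a f u y)"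

definition Jcost :: "(real^'n::finite) set \<Rightarrow> ('n \<Rightarrow> 'n \<Rightarrow> 'n fn) \<Rightarrow> (real^'n \<Rightarrow> real \<Rightarrow> real)
                     \<Rightarrow> (real^'n \<Rightarrow> real \<Rightarrow> real) \<Rightarrow> 'n fn \<Rightarrow> 'n fn \<Rightarrow> real" where
  "Jcost \<Omega> a f L \<zeta> u = (\<integral>x. L x (ysol \<Omega> a f u x) \<partial>lebesgue_on \<Omega>)
                          + 1/2 * (\<integral>x. \<zeta> x * (u x)^2 \<partial>lebesgue_on \<Omega>)"

definition calJ :: "(real^'n::finite) set \<Rightarrow> ('n \<Rightarrow> 'n \<Rightarrow> 'n fn) \<Rightarrow> (real^'n \<Rightarrow> real \<Rightarrow> real)
                     \<Rightarrow> (real^'n \<Rightarrow> real \<Rightarrow> real) \<Rightarrow> 'n fn \<Rightarrow> 'n fn \<Rightarrow> 'n E \<Rightarrow> real" where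
  "calJ \<Omega> a f L \<zeta> u e = Jcost \<Omega> a f L \<zeta> (\<lambda>x. u x + ey e x)
        + ipL2 \<Omega> (eJ e) (ysol \<Omega> a f (\<lambda>x. u x + ey e x))"

definition Ssol :: "(real^'n::finite) set \<Rightarrow> ('n \<Rightarrow> 'n \<Rightarrow> 'n fn) \<Rightarrow> (real^'n \<Rightarrow> real \<Rightarrow> real)
                  \<Rightarrow> (real^'n \<Rightarrow> real \<Rightarrow> real) \<Rightarrow> 'n fn \<Rightarrow> 'n fn \<Rightarrow> 'n fn \<Rightarrow> 'n fn set
                  \<Rightarrow> 'n E \<Rightarrow> 'n fn set" where
  "Ssol \<Omega> a f L \<zeta> \<alpha> \<beta> Q e =
     {u \<in> Gmap \<Omega> \<alpha> \<beta> Q e. \<forall>v \<in> Gmap \<Omega> \<alpha> \<beta> Q e. calJ \<Omega> a f L \<zeta> u e \<le> calJ \<Omega> a f L \<zeta> v e}"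

definition carath_C2 :: "(real^'n::finite) set \<Rightarrow> (real^'n \<Rightarrow> real \<Rightarrow> real) \<Rightarrow> bool" where
  "carath_C2 \<Omega> g \<longleftrightarrow> (\<forall>y. (\<lambda>x. g x y) \<in> borel_measurable (lebesgue_on \<Omega>)) \<and>
     (AE x in lebesgue_on \<Omega>. continuous_on UNIV (g x) \<and>
        (\<forall>y. (g x has_real_derivative deriv (g x) y) (at y) \<and>
             (deriv (g x) has_real_derivative deriv (deriv (g x)) y) (at y)) \<and>
        continuous_on UNIV (deriv (deriv (g x))))"

definition unif_cont_d2 :: "(real^'n::finite) set \<Rightarrow> (real^'n \<Rightarrow> real \<Rightarrow> real) \<Rightarrow> bool" where
  "unif_cont_d2 \<Omega> g \<longleftrightarrow> (\<forall>M \<epsilon>. \<epsilon> > 0 \<longrightarrow> (\<exists>\<delta>>0. AE x in lebesgue_on \<Omega>.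
      \<forall>y1 y2. \<bar>y1\<bar> \<le> M \<longrightarrow> \<bar>y2\<bar> \<le> M \<longrightarrow> \<bar>y1 - y2\<bar> < \<delta> \<longrightarrow>
         \<bar>deriv (deriv (g x)) y1 - deriv (deriv (g x)) y2\<bar> < \<epsilon>))"

definition assmA1 :: "(real^'n::finite) set \<Rightarrow> real \<Rightarrow> (real^'n \<Rightarrow> real \<Rightarrow> real) \<Rightarrow> bool" where
  "assmA1 \<Omega> p f \<longleftrightarrow> carath_C2 \<Omega> f \<and> (\<lambda>x. f x 0) \<in> Lp \<Omega> p \<and>
     (AE x in lebesgue_on \<Omega>. \<forall>y. deriv (f x) y \<ge> 0) \<and>
     (\<forall>M. \<exists>C. AE x in lebesgue_on \<Omega>. \<forall>y. \<bar>y\<bar> \<le> M \<longrightarrow>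
         \<bar>deriv (f x) y\<bar> + \<bar>deriv (deriv (f x)) y\<bar> \<le> C) \<and>
     unif_cont_d2 \<Omega> f"

definition assmA2 :: "(real^'n::finite) set \<Rightarrow> real \<Rightarrow> (real^'n \<Rightarrow> real \<Rightarrow> real) \<Rightarrow> bool" where
  "assmA2 \<Omega> p L \<longleftrightarrow> carath_C2 \<Omega> L \<and> integrable (lebesgue_on \<Omega>) (\<lambda>x. L x 0) \<and>
     (\<forall>M. \<exists>\<psi>. \<psi> \<in> Lp \<Omega> p \<and> (AE x in lebesgue_on \<Omega>. \<forall>y. \<bar>y\<bar> \<le> M \<longrightarrow>
         \<bar>deriv (L x) y\<bar> \<le> \<psi> x)) \<and>
     (\<forall>M. \<exists>C. AE x in lebesgue_on \<Omega>. \<forall>y. \<bar>y\<bar> \<le> M \<longrightarrow> \<bar>deriv (deriv (L x)) y\<bar> \<le> C) \<and>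
     unif_cont_d2 \<Omega> L"

text \<open>Lipschitz boundary: near each boundary point, after a rigid motion, Omega is the
  region below the graph of a Lipschitz function of the remaining N-1 coordinates.\<close>
definition lipschitz_boundary :: "(real^'n::finite) set \<Rightarrow> bool" where
  "lipschitz_boundary \<Omega> \<longleftrightarrow> (\<forall>x0 \<in> frontier \<Omega>. \<exists>r>0. \<exists>(R::real^'n \<Rightarrow> real^'n) (j::'n) (g::real^'n \<Rightarrow> real) (K::real).
      orthogonal_transformation R \<and>
      (\<forall>z w. (\<forall>i. i \<noteq> j \<longrightarrow> z$i = w$i) \<longrightarrow> g z = g w) \<and>
      K-lipschitz_on UNIV g \<and>
      (\<forall>x \<in> ball x0 r. x \<in> \<Omega> \<longleftrightarrow> (R (x - x0))$j < g (R (x - x0))))"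

definition unif_elliptic :: "(real^'n::finite) set \<Rightarrow> ('n \<Rightarrow> 'n \<Rightarrow> 'n fn) \<Rightarrow> bool" where
  "unif_elliptic \<Omega> a \<longleftrightarrow> (\<exists>\<Lambda>>0. \<forall>x\<in>closure \<Omega>. \<forall>\<xi>::real^'n.
      (\<Sum>i\<in>UNIV. \<Sum>j\<in>UNIV. a i j x * \<xi>$i * \<xi>$j) \<ge> \<Lambda> * (norm \<xi>)^2)"

definition L2_closed :: "(real^'n::finite) set \<Rightarrow> 'n fn set \<Rightarrow> bool" where
  "L2_closed \<Omega> Q \<longleftrightarrow> (\<forall>s l. (\<forall>n. s n \<in> Q) \<longrightarrow> l \<in> L2 \<Omega> \<longrightarrow>
      (\<lambda>n. nrmL2 \<Omega> (\<lambda>x. s n x - l x)) \<longlonglongrightarrow> 0 \<longrightarrow> l \<in> Q)"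

definition L2_convex :: "'n fn set \<Rightarrow> bool" where
  "L2_convex Q \<longleftrightarrow> (\<forall>u\<in>Q. \<forall>v\<in>Q. \<forall>t::real. 0 \<le> t \<longrightarrow> t \<le> 1 \<longrightarrow>
      (\<lambda>x. (1 - t) * u x + t * v x) \<in> Q)"

definition L2_bounded :: "(real^'n::finite) set \<Rightarrow> 'n fn set \<Rightarrow> bool" where
  "L2_bounded \<Omega> Q \<longleftrightarrow> (\<exists>C. \<forall>q\<in>Q. nrmL2 \<Omega> q \<le> C)"

definition L2_interior :: "(real^'n::finite) set \<Rightarrow> 'n fn set \<Rightarrow> 'n fn set" where
  "L2_interior \<Omega> Q = {u \<in> L2 \<Omega>. \<exists>r>0. \<forall>v\<in>L2 \<Omega>. nrmL2 \<Omega> (\<lambda>x. v x - u x) < r \<longrightarrow> v \<in> Q}"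

end

theory Submission
  imports Defs
begin

lemma E_sel[simp]: "ey (a,b,c,d) = a" "eJ (a,b,c,d) = b" "ea (a,b,c,d) = c" "eb (a,b,c,d) = d"
  by (simp_all add: ey_def eJ_def ea_def eb_def)

lemma L2_meas: "f \<in> L2 \<Omega> \<Longrightarrow> f \<in> borel_measurable (lebesgue_on \<Omega>)"
  by (simp add: L2_def)

lemma L2_sq: "f \<in> L2 \<Omega> \<Longrightarrow> integrable (lebesgue_on \<Omega>) (\<lambda>x. (f x)^2)"
  by (simp add: L2_def)

lemma L2_prod: assumes "f \<in> L2 \<Omega>" "g \<in> L2 \<Omega>"
  shows "integrable (lebesgue_on \<Omega>) (\<lambda>x. f x * g x)"
proof (rule Bochner_Integration.integrable_bound[where f="\<lambda>x. (f x)^2 + (g x)^2"])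
  show "integrable (lebesgue_on \<Omega>) (\<lambda>x. (f x)^2 + (g x)^2)"
    using assms by (simp add: L2_sq)
  show "(\<lambda>x. f x * g x) \<in> borel_measurable (lebesgue_on \<Omega>)"
    using assms by (simp add: L2_meas borel_measurable_times)
  show "AE x in lebesgue_on \<Omega>. norm (f x * g x) \<le> norm ((f x)^2 + (g x)^2)"
  proof (rule AE_I2)
    fix x
    have "2 * \<bar>f x * g x\<bar> \<le> (f x)^2 + (g x)^2"
    proof -
      have "0 \<le> (\<bar>f x\<bar> - \<bar>g x\<bar>)^2" by simp
      then show ?thesis by (simp add: power2_diff abs_mult)
    qed
    then show "norm (f x * g x) \<le> norm ((f x)^2 + (g x)^2)" by simp
  qed
qed

lemma L2_boundI:
  assumes "g \<in> L2 \<Omega>" "h \<in> borel_measurable (lebesgue_on \<Omega>)"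
    "AE x in lebesgue_on \<Omega>. \<bar>h x\<bar> \<le> \<bar>g x\<bar>"
  shows "h \<in> L2 \<Omega>"
proof -
  have "integrable (lebesgue_on \<Omega>) (\<lambda>x. (h x)^2)"
  proof (rule Bochner_Integration.integrable_bound[where f="\<lambda>x. (g x)^2"])
    show "integrable (lebesgue_on \<Omega>) (\<lambda>x. (g x)^2)" using assms by (simp add: L2_sq)
    show "(\<lambda>x. (h x)^2) \<in> borel_measurable (lebesgue_on \<Omega>)" using assms by simp
    show "AE x in lebesgue_on \<Omega>. norm ((h x)^2) \<le> norm ((g x)^2)"
      using assms(3) by eventually_elim (simp add: abs_le_square_iff)
  qed
  then show ?thesis using assms by (simp add: L2_def)
qed

lemma L2_add: assumes "f \<in> L2 \<Omega>" "g \<in> L2 \<Omega>" shows "(\<lambda>x. f x + g x) \<in> L2 \<Omega>"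
proof -
  have "integrable (lebesgue_on \<Omega>) (\<lambda>x. (f x + g x)^2)"
  proof -
    have "integrable (lebesgue_on \<Omega>) (\<lambda>x. (f x)^2 + 2 * (f x * g x) + (g x)^2)"
      using assms L2_prod[OF assms] by (simp add: L2_sq)
    then show ?thesis by (simp add: power2_sum algebra_simps)
  qed
  then show ?thesis using assms by (simp add: L2_def borel_measurable_add)
qed

lemma L2_cmult: assumes "f \<in> L2 \<Omega>" shows "(\<lambda>x. c * f x) \<in> L2 \<Omega>"
  using assms by (simp add: L2_def power_mult_distrib borel_measurable_times)

lemma L2_uminus: assumes "f \<in> L2 \<Omega>" shows "(\<lambda>x. - f x) \<in> L2 \<Omega>"
  using assms by (simp add: L2_def)

lemma L2_diff: assumes "f \<in> L2 \<Omega>" "g \<in> L2 \<Omega>" shows "(\<lambda>x. f x - g x) \<in> L2 \<Omega>"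
  using L2_add[OF assms(1) L2_uminus[OF assms(2)]] by simp

lemma L2_zero[simp]: "(\<lambda>x. 0) \<in> L2 \<Omega>"
  by (simp add: L2_def)

lemma ipL2_zero_right[simp]: "ipL2 \<Omega> f (\<lambda>x. 0) = 0"
  by (simp add: ipL2_def)

lemma ipL2_scale: "ipL2 \<Omega> f (\<lambda>x. t * g x) = t * ipL2 \<Omega> f g"
  by (simp add: ipL2_def mult.left_commute)

lemma ipL2_self_nonneg: "ipL2 \<Omega> f f \<ge> 0"
  unfolding ipL2_def by (rule integral_nonneg_AE) simp

lemma nonneg_int_le0:
  fixes g :: "'a \<Rightarrow> real"
  assumes "integrable M g" "AE x in M. 0 \<le> g x" "integral\<^sup>L M g \<le> 0"
  shows "AE x in M. g x = 0"
proof -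
  have "integral\<^sup>L M g = 0" using assms(3) Bochner_Integration.integral_nonneg_AE[OF assms(2)] by linarith
  then show ?thesis using integral_nonneg_eq_0_iff_AE[OF assms(1,2)] by simp
qed

lemma L2_self_le0: assumes "f \<in> L2 \<Omega>" "ipL2 \<Omega> f f \<le> 0"
  shows "AE x in lebesgue_on \<Omega>. f x = 0"
proof -
  have "AE x in lebesgue_on \<Omega>. f x * f x = 0"
    using nonneg_int_le0[OF L2_prod[OF assms(1) assms(1)]] assms(2) by (simp add: ipL2_def)
  then show ?thesis by eventually_elim simp
qed

definition scX :: "real \<Rightarrow> 'n E \<times> 'n fn \<Rightarrow> 'n E \<times> 'n fn" where
  "scX t d = (((\<lambda>x. t * ey (fst d) x), (\<lambda>x. t * eJ (fst d) x), (\<lambda>x. t * ea (fst d) x),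
      (\<lambda>x. t * eb (fst d) x)), (\<lambda>x. t * snd d x))"

definition adX :: "'n E \<times> 'n fn \<Rightarrow> 'n E \<times> 'n fn \<Rightarrow> 'n E \<times> 'n fn" where
  "adX z d = (((\<lambda>x. ey (fst z) x + ey (fst d) x), (\<lambda>x. eJ (fst z) x + eJ (fst d) x),
      (\<lambda>x. ea (fst z) x + ea (fst d) x), (\<lambda>x. eb (fst z) x + eb (fst d) x)),
      (\<lambda>x. snd z x + snd d x))"

lemma subX_adX: "subX (adX z d) z = d"
  by (cases d) (auto simp: subX_def adX_def subE_def ey_def eJ_def ea_def eb_def)

lemma ipX_scX: "ipX \<Omega> zs (scX t d) = t * ipX \<Omega> zs d"
  by (simp add: ipX_def ipE_def scX_def ipL2_scale algebra_simps)

lemma ipX_self_nonneg: "ipX \<Omega> d d \<ge> 0"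
  by (simp add: ipX_def ipE_def ipL2_self_nonneg add_nonneg_nonneg)

lemma nrmX_nonneg: "nrmX \<Omega> d \<ge> 0"
  by (simp add: nrmX_def ipX_self_nonneg)

lemma nrmX_scX: assumes "t \<ge> 0" shows "nrmX \<Omega> (scX t d) = t * nrmX \<Omega> d"
proof -
  have "ipX \<Omega> (scX t d) (scX t d) = t^2 * ipX \<Omega> d d"
    by (simp add: ipX_def ipE_def scX_def ipL2_def algebra_simps power2_eq_square)
  then show ?thesis using assms by (simp add: nrmX_def real_sqrt_mult)
qed

lemma reg_normal_dir:
  assumes zs: "zs \<in> reg_normal \<Omega> S z"
    and mem: "\<And>t. 0 < t \<Longrightarrow> t \<le> 1 \<Longrightarrow> adX z (scX t d) \<in> S"
  shows "ipX \<Omega> zs d \<le> 0"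
proof -
  have zS: "z \<in> S" using zs by (simp add: reg_normal_def split: if_splits)
  then have H: "\<forall>\<epsilon>>0. \<exists>\<delta>>0. \<forall>w\<in>S. nrmX \<Omega> (subX w z) < \<delta> \<longrightarrow>
                 ipX \<Omega> zs (subX w z) \<le> \<epsilon> * nrmX \<Omega> (subX w z)"
    using zs by (simp add: reg_normal_def)
  define n where "n = nrmX \<Omega> d"
  have n0: "n \<ge> 0" by (simp add: n_def nrmX_nonneg)
  have key: "ipX \<Omega> zs d \<le> \<epsilon> * n" if e: "\<epsilon> > 0" for \<epsilon>
  proof -
    obtain \<delta> where d0: "\<delta> > 0" and Hd: "\<forall>w\<in>S. nrmX \<Omega> (subX w z) < \<delta> \<longrightarrow>
                 ipX \<Omega> zs (subX w z) \<le> \<epsilon> * nrmX \<Omega> (subX w z)" using H e by blast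
    define t where "t = min 1 (\<delta> / (2 * (n + 1)))"
    have t0: "t > 0" using d0 n0 by (simp add: t_def)
    have t1: "t \<le> 1" by (simp add: t_def)
    have "t * n < \<delta>"
    proof -
      have "t * n \<le> (\<delta> / (2 * (n + 1))) * n" unfolding t_def using n0 by (intro mult_right_mono) auto
      also have "\<dots> < \<delta>" using d0 n0 by (simp add: field_simps add_nonneg_pos)
      finally show ?thesis .
    qed
    then have "nrmX \<Omega> (subX (adX z (scX t d)) z) < \<delta>"
      using t0 by (simp add: subX_adX nrmX_scX n_def)
    then have "ipX \<Omega> zs (subX (adX z (scX t d)) z) \<le> \<epsilon> * nrmX \<Omega> (subX (adX z (scX t d)) z)"
      using Hd mem[OF t0 t1] by blast
    then have "t * ipX \<Omega> zs d \<le> t * (\<epsilon> * n)"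
      using t0 by (simp add: subX_adX nrmX_scX ipX_scX n_def algebra_simps)
    then show ?thesis using t0 by simp
  qed
  show ?thesis
  proof (rule ccontr)
    assume "\<not> ?thesis"
    then have p: "ipX \<Omega> zs d > 0" by simp
    have "ipX \<Omega> zs d \<le> (ipX \<Omega> zs d / (n + 1)) * n" using key[of "ipX \<Omega> zs d / (n + 1)"] p n0 by simp
    also have "\<dots> < ipX \<Omega> zs d" using p n0 by (simp add: field_simps)
    finally show False by simp
  qed
qed


lemma ipL2_uminus_left: "ipL2 \<Omega> (\<lambda>x. - f x) h = - ipL2 \<Omega> f h"
  by (simp add: ipL2_def)

lemma ipL2_AE_zero: "AE x in lebesgue_on \<Omega>. f x = 0 \<Longrightarrow> ipL2 \<Omega> f g = 0"
  unfolding ipL2_def by (rule integral_eq_zero_AE) (auto elim: eventually_mono)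

lemma min_prod_nonneg: "0 \<le> (s::real) \<Longrightarrow> 0 \<le> a * min s a"
  by (cases "a \<le> s") (auto simp: min_def zero_le_mult_iff)
lemma min_prod_zero: "0 \<le> (s::real) \<Longrightarrow> a * min s a = 0 \<Longrightarrow> 0 \<le> a \<and> (0 < s \<longrightarrow> a = 0)"
  by (cases "a \<le> s") (auto simp: min_def split: if_splits)
lemma max_prod_nonneg: "0 \<le> (s::real) \<Longrightarrow> 0 \<le> a * max (- s) a"
  by (cases "a \<le> - s") (auto simp: max_def zero_le_mult_iff mult_le_0_iff)
lemma max_prod_zero: "0 \<le> (s::real) \<Longrightarrow> a * max (- s) a = 0 \<Longrightarrow> a \<le> 0 \<and> (0 < s \<longrightarrow> a = 0)"
  by (cases "a \<le> - s") (auto simp: max_def split: if_splits)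

theorem proposition3p3:
  fixes \<Omega> :: "(real^'n::finite) set"
    and a :: "'n \<Rightarrow> 'n \<Rightarrow> real^'n \<Rightarrow> real"
    and f L :: "real^'n \<Rightarrow> real \<Rightarrow> real"
    and \<alpha> \<beta> \<zeta> :: "real^'n \<Rightarrow> real"
    and Q :: "(real^'n \<Rightarrow> real) set"
    and pbar :: real
    and ebar :: "'n E"
    and ubar :: "real^'n \<Rightarrow> real"
  assumes dim: "CARD('n) \<le> 3"
    and alpha: "\<alpha> \<in> Linf \<Omega>" and beta: "\<beta> \<in> Linf \<Omega>"
    and alpha_le_beta: "AE x in lebesgue_on \<Omega>. \<alpha> x \<le> \<beta> x"
    and alpha_neq_beta: "\<not> (AE x in lebesgue_on \<Omega>. \<alpha> x = \<beta> x)"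
    and zeta: "\<zeta> \<in> L2 \<Omega>" "AE x in lebesgue_on \<Omega>. \<zeta> x \<ge> 0"
    and pbar: "pbar > real CARD('n) / 2"
    and A1: "assmA1 \<Omega> pbar f"
    and A2: "assmA2 \<Omega> pbar L"
    and A3_domain: "open \<Omega>" "bounded \<Omega>" "lipschitz_boundary \<Omega>"
    and A3_Q: "Q \<subseteq> L2 \<Omega>" "L2_convex Q" "L2_closed \<Omega> Q" "L2_bounded \<Omega> Q"
    and A3_slater: "\<exists>e \<in> EL2 \<Omega>. Uad \<Omega> \<alpha> \<beta> e \<inter> L2_interior \<Omega> Q \<noteq> {}"
    and A3_coeff: "\<forall>i j. continuous_on (closure \<Omega>) (a i j)" "unif_elliptic \<Omega> a"
    and ebar: "ebar \<in> EL2 \<Omega>"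
    and ubar: "ubar \<in> Ssol \<Omega> a f L \<zeta> \<alpha> \<beta> Q ebar"
  shows "\<forall>us \<in> L2 \<Omega>. coderivG \<Omega> \<alpha> \<beta> Q ebar ubar us =
     {es \<in> EL2 \<Omega>.
        (AE x in lebesgue_on \<Omega>. ey es x = 0) \<and> (AE x in lebesgue_on \<Omega>. eJ es x = 0) \<and>
        (\<exists>u1 u2. u1 \<in> L2 \<Omega> \<and> u2 \<in> L2 \<Omega> \<and>
           (AE x in lebesgue_on \<Omega>. us x = u1 x - u2 x) \<and>
           (AE x in lebesgue_on \<Omega>. u1 x = ea es x + eb es x) \<and>
           u2 \<in> normal_cone_L2 \<Omega> Q ubar) \<and>
        (AE x in lebesgue_on \<Omega>. x \<in> Omega1 \<Omega> \<alpha> ebar ubar \<longrightarrow> ea es x \<ge> 0) \<and>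
        (AE x in lebesgue_on \<Omega>. x \<notin> Omega1 \<Omega> \<alpha> ebar ubar \<longrightarrow> ea es x = 0) \<and>
        (AE x in lebesgue_on \<Omega>. x \<in> Omega3 \<Omega> \<beta> ebar ubar \<longrightarrow> eb es x \<le> 0) \<and>
        (AE x in lebesgue_on \<Omega>. x \<notin> Omega3 \<Omega> \<beta> ebar ubar \<longrightarrow> eb es x = 0)}"
  proof (intro ballI)
  fix us assume us: "us \<in> L2 \<Omega>"
  have ubG: "ubar \<in> Gmap \<Omega> \<alpha> \<beta> Q ebar" using ubar by (simp add: Ssol_def)
  then have ubL2: "ubar \<in> L2 \<Omega>" and ubQ: "ubar \<in> Q"
    and ubAE: "AE x in lebesgue_on \<Omega>. \<alpha> x + ea ebar x \<le> ubar x \<and> ubar x \<le> \<beta> x + eb ebar x"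
    by (auto simp: Gmap_def Uad_def)
  have zG: "(ebar, ubar) \<in> gphG \<Omega> \<alpha> \<beta> Q" using ebar ubG by (simp add: gphG_def)
  have eb_y: "ey ebar \<in> L2 \<Omega>" and eb_J: "eJ ebar \<in> L2 \<Omega>" and eb_a: "ea ebar \<in> L2 \<Omega>"
    and eb_b: "eb ebar \<in> L2 \<Omega>" using ebar by (auto simp: EL2_def)
  have am: "\<alpha> \<in> borel_measurable (lebesgue_on \<Omega>)" using alpha by (simp add: Linf_def)
  have bm: "\<beta> \<in> borel_measurable (lebesgue_on \<Omega>)" using beta by (simp add: Linf_def)
  show "coderivG \<Omega> \<alpha> \<beta> Q ebar ubar us = {es \<in> EL2 \<Omega>.
        (AE x in lebesgue_on \<Omega>. ey es x = 0) \<and> (AE x in lebesgue_on \<Omega>. eJ es x = 0) \<and>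
        (\<exists>u1 u2. u1 \<in> L2 \<Omega> \<and> u2 \<in> L2 \<Omega> \<and>
           (AE x in lebesgue_on \<Omega>. us x = u1 x - u2 x) \<and>
           (AE x in lebesgue_on \<Omega>. u1 x = ea es x + eb es x) \<and>
           u2 \<in> normal_cone_L2 \<Omega> Q ubar) \<and>
        (AE x in lebesgue_on \<Omega>. x \<in> Omega1 \<Omega> \<alpha> ebar ubar \<longrightarrow> ea es x \<ge> 0) \<and>
        (AE x in lebesgue_on \<Omega>. x \<notin> Omega1 \<Omega> \<alpha> ebar ubar \<longrightarrow> ea es x = 0) \<and>
        (AE x in lebesgue_on \<Omega>. x \<in> Omega3 \<Omega> \<beta> ebar ubar \<longrightarrow> eb es x \<le> 0) \<and>
        (AE x in lebesgue_on \<Omega>. x \<notin> Omega3 \<Omega> \<beta> ebar ubar \<longrightarrow> eb es x = 0)}"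
  proof (intro equalityI subsetI)
    fix es assume "es \<in> coderivG \<Omega> \<alpha> \<beta> Q ebar ubar us"
    then have esE: "es \<in> EL2 \<Omega>"
      and RN: "(es, \<lambda>x. - us x) \<in> reg_normal \<Omega> (gphG \<Omega> \<alpha> \<beta> Q) (ebar, ubar)"
      by (auto simp: coderivG_def)
    have es_y: "ey es \<in> L2 \<Omega>" and es_J: "eJ es \<in> L2 \<Omega>" and es_a: "ea es \<in> L2 \<Omega>"
      and es_b: "eb es \<in> L2 \<Omega>" using esE by (auto simp: EL2_def)
    have "ipX \<Omega> (es, \<lambda>x. - us x) ((ey es, \<lambda>x. 0, \<lambda>x. 0, \<lambda>x. 0), \<lambda>x. 0) \<le> 0"
    proof (rule reg_normal_dir[OF RN])
      fix t :: real assume "0 < t" "t \<le> 1"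
      show "adX (ebar, ubar) (scX t ((ey es, \<lambda>x. 0, \<lambda>x. 0, \<lambda>x. 0), \<lambda>x. 0)) \<in> gphG \<Omega> \<alpha> \<beta> Q"
        using ubL2 ubQ ubAE eb_y eb_J eb_a eb_b es_y
        by (simp add: adX_def scX_def gphG_def EL2_def Gmap_def Uad_def L2_add L2_cmult)
    qed
    then have "ipL2 \<Omega> (ey es) (ey es) \<le> 0" by (simp add: ipX_def ipE_def)
    then have Y: "AE x in lebesgue_on \<Omega>. ey es x = 0" by (rule L2_self_le0[OF es_y])
    have "ipX \<Omega> (es, \<lambda>x. - us x) ((\<lambda>x. 0, eJ es, \<lambda>x. 0, \<lambda>x. 0), \<lambda>x. 0) \<le> 0"
    proof (rule reg_normal_dir[OF RN])
      fix t :: real assume "0 < t" "t \<le> 1"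
      show "adX (ebar, ubar) (scX t ((\<lambda>x. 0, eJ es, \<lambda>x. 0, \<lambda>x. 0), \<lambda>x. 0)) \<in> gphG \<Omega> \<alpha> \<beta> Q"
        using ubL2 ubQ ubAE eb_y eb_J eb_a eb_b es_J
        by (simp add: adX_def scX_def gphG_def EL2_def Gmap_def Uad_def L2_add L2_cmult)
    qed
    then have "ipL2 \<Omega> (eJ es) (eJ es) \<le> 0" by (simp add: ipX_def ipE_def)
    then have J: "AE x in lebesgue_on \<Omega>. eJ es x = 0" by (rule L2_self_le0[OF es_J])
    define u1 where "u1 = (\<lambda>x. ea es x + eb es x)"
    define u2 where "u2 = (\<lambda>x. u1 x - us x)"
    have u1L2: "u1 \<in> L2 \<Omega>" unfolding u1_def by (rule L2_add[OF es_a es_b])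
    have u2L2: "u2 \<in> L2 \<Omega>" unfolding u2_def by (rule L2_diff[OF u1L2 us])
    have NC: "u2 \<in> normal_cone_L2 \<Omega> Q ubar"
    proof -
      have "ipL2 \<Omega> u2 (\<lambda>x. q x - ubar x) \<le> 0" if q: "q \<in> Q" for q
      proof -
        have qL2: "q \<in> L2 \<Omega>" using q A3_Q(1) by blast
        have dL2: "(\<lambda>x. q x - ubar x) \<in> L2 \<Omega>" by (rule L2_diff[OF qL2 ubL2])
        have "ipX \<Omega> (es, \<lambda>x. - us x) ((\<lambda>x. 0, \<lambda>x. 0, \<lambda>x. q x - ubar x, \<lambda>x. q x - ubar x),
                  \<lambda>x. q x - ubar x) \<le> 0"
        proof (rule reg_normal_dir[OF RN])
          fix t :: real assume t: "0 < t" "t \<le> 1"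
          have cq: "(\<lambda>x. (1 - t) * ubar x + t * q x) \<in> Q"
            using A3_Q(2) ubQ q t unfolding L2_convex_def by simp
          have "(\<lambda>x. ubar x + t * (q x - ubar x)) = (\<lambda>x. (1 - t) * ubar x + t * q x)"
            by (rule ext) (simp add: algebra_simps)
          then have cq': "(\<lambda>x. ubar x + t * (q x - ubar x)) \<in> Q" using cq by simp
          have "(\<lambda>x. ubar x + t * (q x - ubar x)) \<in> L2 \<Omega>" using cq' A3_Q(1) by blast
          moreover have "AE x in lebesgue_on \<Omega>. \<alpha> x + (ea ebar x + t * (q x - ubar x)) \<le> ubar x + t * (q x - ubar x)
             \<and> ubar x + t * (q x - ubar x) \<le> \<beta> x + (eb ebar x + t * (q x - ubar x))"
            using ubAE by eventually_elim simp
          moreover have "(\<lambda>x. ea ebar x + t * (q x - ubar x)) \<in> L2 \<Omega>"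
            by (rule L2_add[OF eb_a L2_cmult[OF dL2]])
          moreover have "(\<lambda>x. eb ebar x + t * (q x - ubar x)) \<in> L2 \<Omega>"
            by (rule L2_add[OF eb_b L2_cmult[OF dL2]])
          ultimately show "adX (ebar, ubar) (scX t ((\<lambda>x. 0, \<lambda>x. 0, \<lambda>x. q x - ubar x, \<lambda>x. q x - ubar x),
                  \<lambda>x. q x - ubar x)) \<in> gphG \<Omega> \<alpha> \<beta> Q"
            using cq' eb_y eb_J
            by (simp add: adX_def scX_def gphG_def EL2_def Gmap_def Uad_def)
        qed
        then have "ipL2 \<Omega> (ea es) (\<lambda>x. q x - ubar x) + ipL2 \<Omega> (eb es) (\<lambda>x. q x - ubar x)
            - ipL2 \<Omega> us (\<lambda>x. q x - ubar x) \<le> 0"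
          by (simp add: ipX_def ipE_def ipL2_uminus_left)
        moreover have "ipL2 \<Omega> u2 (\<lambda>x. q x - ubar x) = ipL2 \<Omega> (ea es) (\<lambda>x. q x - ubar x)
            + ipL2 \<Omega> (eb es) (\<lambda>x. q x - ubar x) - ipL2 \<Omega> us (\<lambda>x. q x - ubar x)"
        proof -
          note i1 = L2_prod[OF es_a dL2] and i2 = L2_prod[OF es_b dL2] and i3 = L2_prod[OF us dL2]
          have "(\<lambda>x. u2 x * (q x - ubar x)) = (\<lambda>x. ea es x * (q x - ubar x) + eb es x * (q x - ubar x)
              - us x * (q x - ubar x))"
            by (rule ext) (simp add: u2_def u1_def algebra_simps)
          then show ?thesis unfolding ipL2_def
            using Bochner_Integration.integral_diff[OF Bochner_Integration.integrable_add[OF i1 i2] i3] Bochner_Integration.integral_add[OF i1 i2] by simp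
        qed
        ultimately show ?thesis by simp
      qed
      then show ?thesis using ubQ u2L2 by (simp add: normal_cone_L2_def)
    qed
    define sa where "sa = (\<lambda>x. ubar x - \<alpha> x - ea ebar x)"
    define ha where "ha = (\<lambda>x. min (sa x) (ea es x))"
    have sa0: "AE x in lebesgue_on \<Omega>. 0 \<le> sa x" using ubAE by eventually_elim (simp add: sa_def)
    have sam: "sa \<in> borel_measurable (lebesgue_on \<Omega>)"
      unfolding sa_def using ubL2 am eb_a by (simp add: L2_meas borel_measurable_diff)
    have haL2: "ha \<in> L2 \<Omega>"
    proof (rule L2_boundI[OF es_a])
      show "ha \<in> borel_measurable (lebesgue_on \<Omega>)"
        unfolding ha_def using sam es_a by (simp add: L2_meas borel_measurable_min)
      show "AE x in lebesgue_on \<Omega>. \<bar>ha x\<bar> \<le> \<bar>ea es x\<bar>"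
        using sa0 by eventually_elim (auto simp: ha_def min_def)
    qed
    have "ipX \<Omega> (es, \<lambda>x. - us x) ((\<lambda>x. 0, \<lambda>x. 0, ha, \<lambda>x. 0), \<lambda>x. 0) \<le> 0"
    proof (rule reg_normal_dir[OF RN])
      fix t :: real assume t: "0 < t" "t \<le> 1"
      have "AE x in lebesgue_on \<Omega>. \<alpha> x + (ea ebar x + t * ha x) \<le> ubar x
             \<and> ubar x \<le> \<beta> x + eb ebar x"
        using ubAE sa0
      proof eventually_elim
        case (elim x)
        have "t * ha x \<le> t * sa x" using t by (intro mult_left_mono) (auto simp: ha_def)
        also have "\<dots> \<le> sa x" using t elim by (simp add: mult_left_le_one_le)
        finally show ?case using elim by (simp add: sa_def)
      qed
      moreover have "(\<lambda>x. ea ebar x + t * ha x) \<in> L2 \<Omega>"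
        by (rule L2_add[OF eb_a L2_cmult[OF haL2]])
      ultimately show "adX (ebar, ubar) (scX t ((\<lambda>x. 0, \<lambda>x. 0, ha, \<lambda>x. 0), \<lambda>x. 0)) \<in> gphG \<Omega> \<alpha> \<beta> Q"
        using ubL2 ubQ eb_y eb_J eb_b
        by (simp add: adX_def scX_def gphG_def EL2_def Gmap_def Uad_def)
    qed
    then have "ipL2 \<Omega> (ea es) ha \<le> 0" by (simp add: ipX_def ipE_def)
    then have "AE x in lebesgue_on \<Omega>. ea es x * ha x = 0"
      using nonneg_int_le0[OF L2_prod[OF es_a haL2]] sa0
      by (simp add: ipL2_def ha_def min_prod_nonneg eventually_mono)
    then have AL: "AE x in lebesgue_on \<Omega>. 0 \<le> ea es x \<and> (x \<notin> Omega1 \<Omega> \<alpha> ebar ubar \<longrightarrow> ea es x = 0)"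
      using sa0 AE_space
    proof eventually_elim
      case (elim x)
      have m: "0 \<le> ea es x \<and> (0 < sa x \<longrightarrow> ea es x = 0)"
        using min_prod_zero[of "sa x" "ea es x"] elim by (simp add: ha_def)
      show ?case
      proof (intro conjI impI)
        show "0 \<le> ea es x" using m by simp
        assume "x \<notin> Omega1 \<Omega> \<alpha> ebar ubar"
        then have "sa x \<noteq> 0" using elim by (simp add: Omega1_def sa_def)
        then show "ea es x = 0" using m elim by simp
      qed
    qed
    define sb where "sb = (\<lambda>x. \<beta> x + eb ebar x - ubar x)"
    define hb where "hb = (\<lambda>x. max (- sb x) (eb es x))"
    have sb0: "AE x in lebesgue_on \<Omega>. 0 \<le> sb x" using ubAE by eventually_elim (simp add: sb_def)
    have sbm: "sb \<in> borel_measurable (lebesgue_on \<Omega>)"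
      unfolding sb_def using ubL2 bm eb_b by (simp add: L2_meas borel_measurable_diff borel_measurable_add)
    have hbL2: "hb \<in> L2 \<Omega>"
    proof (rule L2_boundI[OF es_b])
      show "hb \<in> borel_measurable (lebesgue_on \<Omega>)"
        unfolding hb_def using sbm es_b by (simp add: L2_meas borel_measurable_max)
      show "AE x in lebesgue_on \<Omega>. \<bar>hb x\<bar> \<le> \<bar>eb es x\<bar>"
        using sb0 by eventually_elim (auto simp: hb_def max_def)
    qed
    have "ipX \<Omega> (es, \<lambda>x. - us x) ((\<lambda>x. 0, \<lambda>x. 0, \<lambda>x. 0, hb), \<lambda>x. 0) \<le> 0"
    proof (rule reg_normal_dir[OF RN])
      fix t :: real assume t: "0 < t" "t \<le> 1"
      have "AE x in lebesgue_on \<Omega>. \<alpha> x + ea ebar x \<le> ubar x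
             \<and> ubar x \<le> \<beta> x + (eb ebar x + t * hb x)"
        using ubAE sb0
      proof eventually_elim
        case (elim x)
        have "t * (- sb x) \<le> t * hb x" using t by (intro mult_left_mono) (auto simp: hb_def)
        moreover have "- sb x \<le> t * (- sb x)" using t elim by (simp add: mult_left_le_one_le)
        ultimately show ?case using elim by (simp add: sb_def)
      qed
      moreover have "(\<lambda>x. eb ebar x + t * hb x) \<in> L2 \<Omega>"
        by (rule L2_add[OF eb_b L2_cmult[OF hbL2]])
      ultimately show "adX (ebar, ubar) (scX t ((\<lambda>x. 0, \<lambda>x. 0, \<lambda>x. 0, hb), \<lambda>x. 0)) \<in> gphG \<Omega> \<alpha> \<beta> Q"
        using ubL2 ubQ eb_y eb_J eb_a
        by (simp add: adX_def scX_def gphG_def EL2_def Gmap_def Uad_def)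
    qed
    then have "ipL2 \<Omega> (eb es) hb \<le> 0" by (simp add: ipX_def ipE_def)
    then have "AE x in lebesgue_on \<Omega>. eb es x * hb x = 0"
      using nonneg_int_le0[OF L2_prod[OF es_b hbL2]] sb0
      by (simp add: ipL2_def hb_def max_prod_nonneg eventually_mono)
    then have BL: "AE x in lebesgue_on \<Omega>. eb es x \<le> 0 \<and> (x \<notin> Omega3 \<Omega> \<beta> ebar ubar \<longrightarrow> eb es x = 0)"
      using sb0 AE_space
    proof eventually_elim
      case (elim x)
      have m: "eb es x \<le> 0 \<and> (0 < sb x \<longrightarrow> eb es x = 0)"
        using max_prod_zero[of "sb x" "eb es x"] elim by (simp add: hb_def)
      show ?case
      proof (intro conjI impI)
        show "eb es x \<le> 0" using m by simp
        assume "x \<notin> Omega3 \<Omega> \<beta> ebar ubar"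
        then have "sb x \<noteq> 0" using elim by (simp add: Omega3_def sb_def)
        then show "eb es x = 0" using m elim by simp
      qed
    qed
    have "\<exists>u1 u2. u1 \<in> L2 \<Omega> \<and> u2 \<in> L2 \<Omega> \<and>
           (AE x in lebesgue_on \<Omega>. us x = u1 x - u2 x) \<and>
           (AE x in lebesgue_on \<Omega>. u1 x = ea es x + eb es x) \<and>
           u2 \<in> normal_cone_L2 \<Omega> Q ubar"
    proof -
      have "AE x in lebesgue_on \<Omega>. us x = u1 x - u2 x" by (simp add: u2_def)
      moreover have "AE x in lebesgue_on \<Omega>. u1 x = ea es x + eb es x" by (simp add: u1_def)
      ultimately show ?thesis using u1L2 u2L2 NC by blast
    qed
    then show "es \<in> {es \<in> EL2 \<Omega>.
        (AE x in lebesgue_on \<Omega>. ey es x = 0) \<and> (AE x in lebesgue_on \<Omega>. eJ es x = 0) \<and>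
        (\<exists>u1 u2. u1 \<in> L2 \<Omega> \<and> u2 \<in> L2 \<Omega> \<and>
           (AE x in lebesgue_on \<Omega>. us x = u1 x - u2 x) \<and>
           (AE x in lebesgue_on \<Omega>. u1 x = ea es x + eb es x) \<and>
           u2 \<in> normal_cone_L2 \<Omega> Q ubar) \<and>
        (AE x in lebesgue_on \<Omega>. x \<in> Omega1 \<Omega> \<alpha> ebar ubar \<longrightarrow> ea es x \<ge> 0) \<and>
        (AE x in lebesgue_on \<Omega>. x \<notin> Omega1 \<Omega> \<alpha> ebar ubar \<longrightarrow> ea es x = 0) \<and>
        (AE x in lebesgue_on \<Omega>. x \<in> Omega3 \<Omega> \<beta> ebar ubar \<longrightarrow> eb es x \<le> 0) \<and>
        (AE x in lebesgue_on \<Omega>. x \<notin> Omega3 \<Omega> \<beta> ebar ubar \<longrightarrow> eb es x = 0)}"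
      using esE Y J AL BL by (auto elim: eventually_mono)
  next
    fix es assume "es \<in> {es \<in> EL2 \<Omega>.
        (AE x in lebesgue_on \<Omega>. ey es x = 0) \<and> (AE x in lebesgue_on \<Omega>. eJ es x = 0) \<and>
        (\<exists>u1 u2. u1 \<in> L2 \<Omega> \<and> u2 \<in> L2 \<Omega> \<and>
           (AE x in lebesgue_on \<Omega>. us x = u1 x - u2 x) \<and>
           (AE x in lebesgue_on \<Omega>. u1 x = ea es x + eb es x) \<and>
           u2 \<in> normal_cone_L2 \<Omega> Q ubar) \<and>
        (AE x in lebesgue_on \<Omega>. x \<in> Omega1 \<Omega> \<alpha> ebar ubar \<longrightarrow> ea es x \<ge> 0) \<and>
        (AE x in lebesgue_on \<Omega>. x \<notin> Omega1 \<Omega> \<alpha> ebar ubar \<longrightarrow> ea es x = 0) \<and>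
        (AE x in lebesgue_on \<Omega>. x \<in> Omega3 \<Omega> \<beta> ebar ubar \<longrightarrow> eb es x \<le> 0) \<and>
        (AE x in lebesgue_on \<Omega>. x \<notin> Omega3 \<Omega> \<beta> ebar ubar \<longrightarrow> eb es x = 0)}"
    then obtain u1 u2 where esE: "es \<in> EL2 \<Omega>" and Y: "AE x in lebesgue_on \<Omega>. ey es x = 0"
      and J: "AE x in lebesgue_on \<Omega>. eJ es x = 0"
      and u1L2: "u1 \<in> L2 \<Omega>" and u2L2: "u2 \<in> L2 \<Omega>"
      and U: "AE x in lebesgue_on \<Omega>. us x = u1 x - u2 x"
      and U1: "AE x in lebesgue_on \<Omega>. u1 x = ea es x + eb es x"
      and NC: "u2 \<in> normal_cone_L2 \<Omega> Q ubar"
      and A1': "AE x in lebesgue_on \<Omega>. x \<in> Omega1 \<Omega> \<alpha> ebar ubar \<longrightarrow> ea es x \<ge> 0"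
      and A2': "AE x in lebesgue_on \<Omega>. x \<notin> Omega1 \<Omega> \<alpha> ebar ubar \<longrightarrow> ea es x = 0"
      and B1': "AE x in lebesgue_on \<Omega>. x \<in> Omega3 \<Omega> \<beta> ebar ubar \<longrightarrow> eb es x \<le> 0"
      and B2': "AE x in lebesgue_on \<Omega>. x \<notin> Omega3 \<Omega> \<beta> ebar ubar \<longrightarrow> eb es x = 0"
      by blast
    have es_a: "ea es \<in> L2 \<Omega>" and es_b: "eb es \<in> L2 \<Omega>" using esE by (auto simp: EL2_def)
    have key: "ipX \<Omega> (es, \<lambda>x. - us x) (subX w (ebar, ubar)) \<le> 0" if w: "w \<in> gphG \<Omega> \<alpha> \<beta> Q" for w
    proof -
      obtain e u where wd: "w = (e, u)" by (cases w)
      have eE: "e \<in> EL2 \<Omega>" and uG: "u \<in> Gmap \<Omega> \<alpha> \<beta> Q e" using w wd by (auto simp: gphG_def)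
      then have uL2: "u \<in> L2 \<Omega>" and uQ: "u \<in> Q"
        and uAE: "AE x in lebesgue_on \<Omega>. \<alpha> x + ea e x \<le> u x \<and> u x \<le> \<beta> x + eb e x"
        by (auto simp: Gmap_def Uad_def)
      have e_a: "ea e \<in> L2 \<Omega>" and e_b: "eb e \<in> L2 \<Omega>" using eE by (auto simp: EL2_def)
      define Da where "Da = (\<lambda>x. ea e x - ea ebar x)"
      define Db where "Db = (\<lambda>x. eb e x - eb ebar x)"
      define Du where "Du = (\<lambda>x. u x - ubar x)"
      have DaL2: "Da \<in> L2 \<Omega>" unfolding Da_def by (rule L2_diff[OF e_a eb_a])
      have DbL2: "Db \<in> L2 \<Omega>" unfolding Db_def by (rule L2_diff[OF e_b eb_b])
      have DuL2: "Du \<in> L2 \<Omega>" unfolding Du_def by (rule L2_diff[OF uL2 ubL2])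
      have eq1: "ipX \<Omega> (es, \<lambda>x. - us x) (subX w (ebar, ubar)) =
          ipL2 \<Omega> (ea es) Da + ipL2 \<Omega> (eb es) Db - ipL2 \<Omega> us Du"
        using ipL2_AE_zero[OF Y] ipL2_AE_zero[OF J]
        by (simp add: wd ipX_def ipE_def subX_def subE_def Da_def Db_def Du_def ipL2_uminus_left)
      define F where "F = (\<lambda>x. ea es x * Da x + eb es x * Db x - us x * Du x - u2 x * Du x)"
      have i1: "integrable (lebesgue_on \<Omega>) (\<lambda>x. ea es x * Da x)" by (rule L2_prod[OF es_a DaL2])
      have i2: "integrable (lebesgue_on \<Omega>) (\<lambda>x. eb es x * Db x)" by (rule L2_prod[OF es_b DbL2])
      have i3: "integrable (lebesgue_on \<Omega>) (\<lambda>x. us x * Du x)" by (rule L2_prod[OF us DuL2])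
      have i4: "integrable (lebesgue_on \<Omega>) (\<lambda>x. u2 x * Du x)" by (rule L2_prod[OF u2L2 DuL2])
      have eq2: "integral\<^sup>L (lebesgue_on \<Omega>) F =
          ipL2 \<Omega> (ea es) Da + ipL2 \<Omega> (eb es) Db - ipL2 \<Omega> us Du - ipL2 \<Omega> u2 Du"
        unfolding F_def ipL2_def
        using Bochner_Integration.integral_diff[OF Bochner_Integration.integrable_diff[OF Bochner_Integration.integrable_add[OF i1 i2] i3] i4]
          Bochner_Integration.integral_diff[OF Bochner_Integration.integrable_add[OF i1 i2] i3] Bochner_Integration.integral_add[OF i1 i2] by simp
      have "AE x in lebesgue_on \<Omega>. F x \<le> 0"
        using U U1 A1' A2' B1' B2' uAE
      proof eventually_elim
        case (elim x)
        have Fx: "F x = ea es x * (Da x - Du x) + eb es x * (Db x - Du x)"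
        proof -
          have h: "us x = ea es x + eb es x - u2 x" using elim(1,2) by simp
          show ?thesis unfolding F_def h by (simp add: algebra_simps)
        qed
        have a: "ea es x * (Da x - Du x) \<le> 0"
        proof (cases "x \<in> Omega1 \<Omega> \<alpha> ebar ubar")
          case True
          then have "ubar x = \<alpha> x + ea ebar x" by (simp add: Omega1_def)
          then have "Da x - Du x \<le> 0" using elim(7) by (simp add: Da_def Du_def)
          then show ?thesis using True elim(3) by (simp add: mult_nonneg_nonpos)
        next
          case False then show ?thesis using elim(4) by simp
        qed
        have b: "eb es x * (Db x - Du x) \<le> 0"
        proof (cases "x \<in> Omega3 \<Omega> \<beta> ebar ubar")
          case True
          then have "ubar x = \<beta> x + eb ebar x" by (simp add: Omega3_def)
          then have "Db x - Du x \<ge> 0" using elim(7) by (simp add: Db_def Du_def)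
          then show ?thesis using True elim(5) by (simp add: mult_nonpos_nonneg)
        next
          case False then show ?thesis using elim(6) by simp
        qed
        show ?case using Fx a b by simp
      qed
      then have "0 \<le> integral\<^sup>L (lebesgue_on \<Omega>) (\<lambda>x. - F x)"
        by (intro Bochner_Integration.integral_nonneg_AE) (auto elim: eventually_mono)
      then have "integral\<^sup>L (lebesgue_on \<Omega>) F \<le> 0" by simp
      moreover have "ipL2 \<Omega> u2 Du \<le> 0"
        using NC uQ by (simp add: normal_cone_L2_def Du_def split: if_splits)
      ultimately show ?thesis using eq1 eq2 by linarith
    qed
    have "(es, \<lambda>x. - us x) \<in> reg_normal \<Omega> (gphG \<Omega> \<alpha> \<beta> Q) (ebar, ubar)"
    proof -
      have "\<forall>\<epsilon>>0. \<exists>\<delta>>0. \<forall>w\<in>gphG \<Omega> \<alpha> \<beta> Q. nrmX \<Omega> (subX w (ebar, ubar)) < \<delta> \<longrightarrow>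
                 ipX \<Omega> (es, \<lambda>x. - us x) (subX w (ebar, ubar)) \<le> \<epsilon> * nrmX \<Omega> (subX w (ebar, ubar))"
      proof (intro allI impI exI[of _ 1] conjI ballI)
        fix \<epsilon> :: real and w assume "\<epsilon> > 0" "w \<in> gphG \<Omega> \<alpha> \<beta> Q"
        then show "ipX \<Omega> (es, \<lambda>x. - us x) (subX w (ebar, ubar)) \<le> \<epsilon> * nrmX \<Omega> (subX w (ebar, ubar))"
          using key[of w] nrmX_nonneg[of \<Omega> "subX w (ebar, ubar)"] by (smt (verit) mult_nonneg_nonneg)
      qed simp
      then show ?thesis unfolding reg_normal_def using zG esE L2_uminus[OF us] by simp
    qed
    then show "es \<in> coderivG \<Omega> \<alpha> \<beta> Q ebar ubar us" using esE by (simp add: coderivG_def)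
  qed
qed

end
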